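(* For every $a\in S_A$ and every $b\in S_B$, the vertices $a$ and $b$ are adjacent in $\Gamma$.
   Context: All graphs are finite and simple. A graph $G$ is a minimal prime graph complement if $G$ has at least $2$ vertices and: (1) the complement $\overline{G}$ is connected; (2) $G$ is triangle-free; (3) $G$ is $3$-colorable; (4) for any two distinct nonadjacent vertices $u,v$ of $G$, adding the edge $uv$ to $G$ yields a graph that either contains a triangle or is not $3$-colorable. Standing setup: $\Gamma$ is a minimal prime graph complement with a vertex $X$ of degree $2$, whose two neighbors are $A$ and $B$. Among the vertices of $\Gamma$ other than $X,A,B$: $S_A$ is the set of those adjacent to $A$ but not $B$; $S_B$ the set of those adjacent to $B$ but not $A$; $S_Y$ the set of those adjacent to both $A$ and $B$; $S_Z$ the set of those adjacent to neither $A$ nor $B$. *)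

theory Defs
  imports Main
begin

definition simple_graph :: "'a set \<Rightarrow> ('a \<Rightarrow> 'a \<Rightarrow> bool) \<Rightarrow> bool" where
  "simple_graph V E \<longleftrightarrow> finite V \<and> (\<forall>x y. E x y \<longrightarrow> x \<in> V \<and> y \<in> V)
     \<and> (\<forall>x y. E x y \<longrightarrow> E y x) \<and> (\<forall>x. \<not> E x x)"

definition complement_edge :: "'a set \<Rightarrow> ('a \<Rightarrow> 'a \<Rightarrow> bool) \<Rightarrow> 'a \<Rightarrow> 'a \<Rightarrow> bool" where
  "complement_edge V E x y \<longleftrightarrow> x \<in> V \<and> y \<in> V \<and> x \<noteq> y \<and> \<not> E x y"

definition connected_graph :: "'a set \<Rightarrow> ('a \<Rightarrow> 'a \<Rightarrow> bool) \<Rightarrow> bool" where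
  "connected_graph V E \<longleftrightarrow> (\<forall>x\<in>V. \<forall>y\<in>V. E\<^sup>*\<^sup>* x y)"

definition triangle_free :: "'a set \<Rightarrow> ('a \<Rightarrow> 'a \<Rightarrow> bool) \<Rightarrow> bool" where
  "triangle_free V E \<longleftrightarrow> \<not> (\<exists>x\<in>V. \<exists>y\<in>V. \<exists>z\<in>V. E x y \<and> E y z \<and> E x z)"

definition three_colorable :: "'a set \<Rightarrow> ('a \<Rightarrow> 'a \<Rightarrow> bool) \<Rightarrow> bool" where
  "three_colorable V E \<longleftrightarrow> (\<exists>c :: 'a \<Rightarrow> nat. (\<forall>x\<in>V. c x < 3)
      \<and> (\<forall>x\<in>V. \<forall>y\<in>V. E x y \<longrightarrow> c x \<noteq> c y))"

definition add_edge :: "('a \<Rightarrow> 'a \<Rightarrow> bool) \<Rightarrow> 'a \<Rightarrow> 'a \<Rightarrow> 'a \<Rightarrow> 'a \<Rightarrow> bool" where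
  "add_edge E u v = (\<lambda>x y. E x y \<or> (x = u \<and> y = v) \<or> (x = v \<and> y = u))"

definition minimal_prime_graph_complement :: "'a set \<Rightarrow> ('a \<Rightarrow> 'a \<Rightarrow> bool) \<Rightarrow> bool" where
  "minimal_prime_graph_complement V E \<longleftrightarrow>
     simple_graph V E \<and> card V \<ge> 2 \<and>
     connected_graph V (complement_edge V E) \<and>
     triangle_free V E \<and> three_colorable V E \<and>
     (\<forall>u\<in>V. \<forall>v\<in>V. u \<noteq> v \<and> \<not> E u v \<longrightarrow>
        \<not> triangle_free V (add_edge E u v) \<or> \<not> three_colorable V (add_edge E u v))"

end

theory Submission
  imports Defs
begin

lemma addable_contra:
  assumes mpgc: "minimal_prime_graph_complement V E"
    and u: "u \<in> V" and v: "v \<in> V" and uv: "u \<noteq> v" and nuv: "\<not> E u v"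
    and nc: "\<forall>w\<in>V. \<not> (E u w \<and> E v w)"
    and c3: "\<forall>x\<in>V. c x < (3::nat)"
    and cp: "\<forall>x\<in>V. \<forall>y\<in>V. E x y \<longrightarrow> c x \<noteq> c y"
    and cuv: "c u \<noteq> c v"
  shows False
proof -
  have sg: "simple_graph V E" and tf: "triangle_free V E"
    and mx: "\<not> triangle_free V (add_edge E u v) \<or> \<not> three_colorable V (add_edge E u v)"
    using mpgc u v uv nuv unfolding minimal_prime_graph_complement_def by auto
  have sym: "\<And>x y. E x y \<Longrightarrow> E y x" and irr: "\<And>x. \<not> E x x"
    using sg unfolding simple_graph_def by auto
  have "triangle_free V (add_edge E u v)"
    unfolding triangle_free_def add_edge_def
  proof clarify
    fix x y z assume xyz: "x \<in> V" "y \<in> V" "z \<in> V"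
      and e1: "E x y \<or> x = u \<and> y = v \<or> x = v \<and> y = u"
      and e2: "E y z \<or> y = u \<and> z = v \<or> y = v \<and> z = u"
      and e3: "E x z \<or> x = u \<and> z = v \<or> x = v \<and> z = u"
    show False
      using e1 e2 e3 xyz tf nc uv irr sym unfolding triangle_free_def by metis
  qed
  moreover have "three_colorable V (add_edge E u v)"
    unfolding three_colorable_def add_edge_def
    using c3 cp cuv by metis
  ultimately show False using mx by blast
qed

theorem lemma11:
  fixes V :: "'a set" and E :: "'a \<Rightarrow> 'a \<Rightarrow> bool" and X A B a b :: 'a
  assumes mpgc: "minimal_prime_graph_complement V E"
    and X: "X \<in> V" and AB: "A \<noteq> B" and EXA: "E X A" and EXB: "E X B"
    and degX: "\<forall>w\<in>V. E X w \<longrightarrow> w = A \<or> w = B"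
    and a: "a \<in> V - {X, A, B}" and aA: "E a A" and aB: "\<not> E a B"
    and b: "b \<in> V - {X, A, B}" and bB: "E b B" and bA: "\<not> E b A"
  shows "E a b"
proof (rule ccontr)
  assume nab: "\<not> E a b"
  have sg: "simple_graph V E" and tf: "triangle_free V E" and col: "three_colorable V E"
    using mpgc unfolding minimal_prime_graph_complement_def by auto
  have sym: "\<And>x y. E x y \<Longrightarrow> E y x" and irr: "\<And>x. \<not> E x x"
    and inV: "\<And>x y. E x y \<Longrightarrow> x \<in> V \<and> y \<in> V"
    using sg unfolding simple_graph_def by auto
  have tri: "\<And>x y z. E x y \<Longrightarrow> E y z \<Longrightarrow> E x z \<Longrightarrow> False"
    using tf inV unfolding triangle_free_def by blast
  have AV: "A \<in> V" and BV: "B \<in> V" using inV EXA EXB by auto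
  have XZ: False if z: "z \<in> V" "\<not> E z A" "\<not> E z B" "z \<noteq> A" "z \<noteq> B"
    and c3: "\<forall>x\<in>V. c x < (3::nat)" and cp: "\<forall>x\<in>V. \<forall>y\<in>V. E x y \<longrightarrow> c x \<noteq> c y"
    and cz: "c X \<noteq> c z" for z c
  proof (rule addable_contra[OF mpgc X z(1) _ _ _ c3 cp cz])
    show "X \<noteq> z" using z EXA by auto
    show "\<not> E X z" using degX z sym by auto
    show "\<forall>w\<in>V. \<not> (E X w \<and> E z w)" using degX z sym by auto
  qed
  show False
  proof (cases "\<exists>z1\<in>V. \<exists>z2\<in>V. E z1 z2 \<and> \<not> E z1 A \<and> \<not> E z1 B \<and> \<not> E z2 A \<and> \<not> E z2 B")
    case True
    then obtain z1 z2 where z: "z1 \<in> V" "z2 \<in> V" "E z1 z2" "\<not> E z1 A" "\<not> E z1 B"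
      "\<not> E z2 A" "\<not> E z2 B" by blast
    have zAB: "z1 \<noteq> A" "z1 \<noteq> B" "z2 \<noteq> A" "z2 \<noteq> B" using z sym by auto
    obtain c :: "'a \<Rightarrow> nat" where c3: "\<forall>x\<in>V. c x < 3"
      and cp: "\<forall>x\<in>V. \<forall>y\<in>V. E x y \<longrightarrow> c x \<noteq> c y"
      using col unfolding three_colorable_def by blast
    have "c z1 \<noteq> c z2" using cp z by blast
    then show False
    proof (cases "c X = c z1")
      case True
      then show ?thesis using XZ[of z2 c] z zAB c3 cp \<open>c z1 \<noteq> c z2\<close> by auto
    next
      case False
      then show ?thesis using XZ[of z1 c] z zAB c3 cp by auto
    qed
  next
    case False
    define d :: "'a \<Rightarrow> nat" where "d v = (if E v A then 0 else if E v B then 1 else 2)" for v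
    have d3: "\<forall>x\<in>V. d x < 3" unfolding d_def by auto
    have dp: "\<forall>x\<in>V. \<forall>y\<in>V. E x y \<longrightarrow> d x \<noteq> d y"
    proof clarify
      fix x y assume xy: "x \<in> V" "y \<in> V" "E x y" "d x = d y"
      show False
      proof (cases "E x A")
        case True
        then show ?thesis using xy tri[of x y A] sym unfolding d_def by (auto split: if_splits)
      next
        case nA: False
        show ?thesis
        proof (cases "E x B")
          case True
          then show ?thesis using xy nA tri[of x y B] sym unfolding d_def by (auto split: if_splits)
        next
          case False
          then show ?thesis using xy nA \<open>\<not> (\<exists>z1\<in>V. \<exists>z2\<in>V. _)\<close> unfolding d_def
            by (auto split: if_splits)
        qed
      qed
    qed
    show False
    proof (cases "\<exists>z\<in>V. z \<noteq> A \<and> z \<noteq> B \<and> \<not> E z A \<and> \<not> E z B")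
      case True
      then obtain z where z: "z \<in> V" "z \<noteq> A" "z \<noteq> B" "\<not> E z A" "\<not> E z B" by blast
      have "d X \<noteq> d z" using EXA z unfolding d_def by auto
      then show False using XZ[of z d] z d3 dp by auto
    next
      case False
      have "a \<noteq> b" using aA bA by auto
      moreover have "\<forall>w\<in>V. \<not> (E a w \<and> E b w)"
      proof clarify
        fix w assume w: "w \<in> V" "E a w" "E b w"
        show False
        proof (cases "w = A \<or> w = B")
          case True then show ?thesis using w aB bA by auto
        next
          case nw: False
          then have "E w A \<or> E w B" using False w by auto
          then show ?thesis using w tri[of a w A] tri[of b w B] aA bB by auto
        qed
      qed
      moreover have "d a \<noteq> d b" using aA bA bB unfolding d_def by auto
      ultimately show False
        using addable_contra[OF mpgc _ _ _ nab _ d3 dp] a b by auto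
    qed
  qed
qed

end
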